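(* Consider a rule of the PJR-Exact family run on $(\mathcal{A},k)$, and fix $j$ with $0\le j\le k-1$ such that iterations $1,\dots,j$ are all normal (for $j=0$ this is vacuous). If some candidate $c_1\in C\setminus W_j$ is in an eager state after $j$ iterations, then there exists a candidate $c_2\in C\setminus W_j$ that is in a normal state after $j$ iterations.
   Context: Setting: voters $N=\{1,\dots,n\}$, candidates $C=\{c_1,\dots,c_m\}$, approval ballots $A_i\subseteq C$, $\mathcal{A}=(A_1,\dots,A_n)$, $k$ a positive integer with $k\le|C|$, $q=n/k$, $N_c=\{i: c\in A_i\}$. Convention: $\max\emptyset=0$. Dissatisfaction level: for $W\subseteq C$ with $|W|\le k$ and $c\in C\setminus W$, $\ell(c,W)$ is the largest nonnegative integer $\ell$ with $\ell=\lfloor \frac{k}{n}|\{i\in N: c\in A_i,\ |A_i\cap W|<\ell\}|\rfloor$. PJR-Exact family: iterative procedures selecting $w_1,\dots,w_k$, $W_0=\emptyset$, $W_j=W_{j-1}\cup\{w_j\}$, $w_j\notin W_{j-1}$, with vote fractions $f_i^0=1$, $0\le f_i^j\le f_i^{j-1}$, such that at each iteration $j$: (a) $f_i^j=f_i^{j-1}$ for $i\notin N_{w_j}$; (b) with $s=\sum_{i\in N_{w_j}}f_i^{j-1}$, if $s>q$ then $\sum_{i\in N_{w_j}}(f_i^{j-1}-f_i^j)=q$, and if $s\le q$ then $f_i^j=0$ for all $i\in N_{w_j}$; (c) if some $c\in C\setminus W_{j-1}$ has $\sum_{i\in N_c}f_i^{j-1}\ge q$ then $\sum_{i\in N_{w_j}}f_i^{j-1}\ge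 q$. Notation along a run: $\ell_j(c)=\ell(c,W_j)$ for $c\in C\setminus W_j$; for $c\in C\setminus W_j$ and $i\in N_c$, $\ell_j(i,c)=\max_{c'\in A_i\setminus(W_j\cup\{c\})}\ell_j(c')$; $g_i^j(c)=0$ if $\ell_j(i,c)\le|A_i\cap W_j|$ and $g_i^j(c)=\frac{\ell_j(i,c)-|A_i\cap W_j|-1}{\ell_j(i,c)}$ otherwise. States of $c\in C\setminus W_j$ after $j$ iterations: normal if (1) for each $i\in N_c$ with $\ell_j(i,c)>|A_i\cap W_j|$ we have $f_i^j\ge\frac{\ell_j(i,c)-|A_i\cap W_j|}{\ell_j(i,c)}$, and (2) $\sum_{i\in N_c}(f_i^j-g_i^j(c))\ge q$; starving if (1) fails; eager if not starving, $\sum_{i\in N_c}f_i^j\ge q$ and $\sum_{i\in N_c}(f_i^j-g_i^j(c))<q$; insufficiently supported if not starving and $\sum_{i\in N_c}f_i^j<q$. Normal iteration: iteration $j$ ($1\le j\le k$) is normal if $w_j$ is in normal state after $j-1$ iterations and, for each $i\in N_{w_j}$ with $\ell_{j-1}(i,w_j)>|A_i\cap W_{j-1}|$, $f_i^j\ge\frac{\ell_{j-1}(i,w_j)-|A_i\cap W_j|}{\ell_{j-1}(i,w_j)}$. *)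

theory Defs
  imports Complex_Main
begin

(* A run of a rule consists of the selected
   candidates w 1, ..., w k and the vote fractions f j i  (= f_i^j). *)

definition voters :: "nat \<Rightarrow> (nat \<Rightarrow> 'c set) \<Rightarrow> 'c \<Rightarrow> nat set" where
  "voters n A c = {i \<in> {1..n}. c \<in> A i}"

definition quota :: "nat \<Rightarrow> nat \<Rightarrow> real" where
  "quota n k = real n / real k"

definition Wset :: "(nat \<Rightarrow> 'c) \<Rightarrow> nat \<Rightarrow> 'c set" where
  "Wset w j = w ` {1..j}"

definition dlevel :: "nat \<Rightarrow> (nat \<Rightarrow> 'c set) \<Rightarrow> nat \<Rightarrow> 'c \<Rightarrow> 'c set \<Rightarrow> nat" where
  "dlevel n A k c W = Max {l::nat. int l =
      \<lfloor>real k / real n * real (card {i \<in> {1..n}. c \<in> A i \<and> card (A i \<inter> W) < l})\<rfloor>}"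

definition voter_level :: "nat \<Rightarrow> (nat \<Rightarrow> 'c set) \<Rightarrow> nat \<Rightarrow> 'c set \<Rightarrow> nat \<Rightarrow> 'c \<Rightarrow> nat" where
  "voter_level n A k W i c =
     (if A i - (W \<union> {c}) = {} then 0
      else Max ((\<lambda>c'. dlevel n A k c' W) ` (A i - (W \<union> {c}))))"

definition gval :: "nat \<Rightarrow> (nat \<Rightarrow> 'c set) \<Rightarrow> nat \<Rightarrow> 'c set \<Rightarrow> nat \<Rightarrow> 'c \<Rightarrow> real" where
  "gval n A k W i c =
     (let L = voter_level n A k W i c in
      if L \<le> card (A i \<inter> W) then 0
      else (real L - real (card (A i \<inter> W)) - 1) / real L)"

definition pjr_exact_run ::
  "nat \<Rightarrow> 'c set \<Rightarrow> (nat \<Rightarrow> 'c set) \<Rightarrow> nat \<Rightarrow> (nat \<Rightarrow> 'c) \<Rightarrow> (nat \<Rightarrow> nat \<Rightarrow> real) \<Rightarrow> bool" where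
  "pjr_exact_run n C A k w f \<longleftrightarrow>
     (\<forall>i\<in>{1..n}. f 0 i = 1) \<and>
     (\<forall>j\<in>{1..k}.
        w j \<in> C \<and> w j \<notin> Wset w (j - 1) \<and>
        (\<forall>i\<in>{1..n}. 0 \<le> f j i \<and> f j i \<le> f (j - 1) i) \<and>
        (\<forall>i\<in>{1..n} - voters n A (w j). f j i = f (j - 1) i) \<and>
        (let s = (\<Sum>i\<in>voters n A (w j). f (j - 1) i) in
          (s > quota n k \<longrightarrow>
             (\<Sum>i\<in>voters n A (w j). f (j - 1) i - f j i) = quota n k) \<and>
          (s \<le> quota n k \<longrightarrow> (\<forall>i\<in>voters n A (w j). f j i = 0))) \<and>
        ((\<exists>c\<in>C - Wset w (j - 1). (\<Sum>i\<in>voters n A c. f (j - 1) i) \<ge> quota n k) \<longrightarrow>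
           (\<Sum>i\<in>voters n A (w j). f (j - 1) i) \<ge> quota n k))"

definition not_starving ::
  "nat \<Rightarrow> (nat \<Rightarrow> 'c set) \<Rightarrow> nat \<Rightarrow> (nat \<Rightarrow> 'c) \<Rightarrow> (nat \<Rightarrow> nat \<Rightarrow> real) \<Rightarrow> nat \<Rightarrow> 'c \<Rightarrow> bool" where
  "not_starving n A k w f j c \<longleftrightarrow>
     (\<forall>i\<in>voters n A c.
        voter_level n A k (Wset w j) i c > card (A i \<inter> Wset w j) \<longrightarrow>
        f j i \<ge> (real (voter_level n A k (Wset w j) i c) - real (card (A i \<inter> Wset w j)))
                 / real (voter_level n A k (Wset w j) i c))"

definition normal_state ::
  "nat \<Rightarrow> (nat \<Rightarrow> 'c set) \<Rightarrow> nat \<Rightarrow> (nat \<Rightarrow> 'c) \<Rightarrow> (nat \<Rightarrow> nat \<Rightarrow> real) \<Rightarrow> nat \<Rightarrow> 'c \<Rightarrow> bool" where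
  "normal_state n A k w f j c \<longleftrightarrow>
     not_starving n A k w f j c \<and>
     (\<Sum>i\<in>voters n A c. f j i - gval n A k (Wset w j) i c) \<ge> quota n k"

definition starving_state ::
  "nat \<Rightarrow> (nat \<Rightarrow> 'c set) \<Rightarrow> nat \<Rightarrow> (nat \<Rightarrow> 'c) \<Rightarrow> (nat \<Rightarrow> nat \<Rightarrow> real) \<Rightarrow> nat \<Rightarrow> 'c \<Rightarrow> bool" where
  "starving_state n A k w f j c \<longleftrightarrow> \<not> not_starving n A k w f j c"

definition eager_state ::
  "nat \<Rightarrow> (nat \<Rightarrow> 'c set) \<Rightarrow> nat \<Rightarrow> (nat \<Rightarrow> 'c) \<Rightarrow> (nat \<Rightarrow> nat \<Rightarrow> real) \<Rightarrow> nat \<Rightarrow> 'c \<Rightarrow> bool" where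
  "eager_state n A k w f j c \<longleftrightarrow>
     \<not> starving_state n A k w f j c \<and>
     (\<Sum>i\<in>voters n A c. f j i) \<ge> quota n k \<and>
     (\<Sum>i\<in>voters n A c. f j i - gval n A k (Wset w j) i c) < quota n k"

definition normal_iteration ::
  "nat \<Rightarrow> (nat \<Rightarrow> 'c set) \<Rightarrow> nat \<Rightarrow> (nat \<Rightarrow> 'c) \<Rightarrow> (nat \<Rightarrow> nat \<Rightarrow> real) \<Rightarrow> nat \<Rightarrow> bool" where
  "normal_iteration n A k w f j \<longleftrightarrow>
     normal_state n A k w f (j - 1) (w j) \<and>
     (\<forall>i\<in>voters n A (w j).
        voter_level n A k (Wset w (j - 1)) i (w j) > card (A i \<inter> Wset w (j - 1)) \<longrightarrow>
        f j i \<ge> (real (voter_level n A k (Wset w (j - 1)) i (w j)) - real (card (A i \<inter> Wset w j)))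
                 / real (voter_level n A k (Wset w (j - 1)) i (w j)))"

end

theory Submission
  imports Defs
begin

definition hfun :: "nat \<Rightarrow> (nat \<Rightarrow> 'c set) \<Rightarrow> nat \<Rightarrow> 'c \<Rightarrow> 'c set \<Rightarrow> nat \<Rightarrow> int" where
  "hfun n A k c W l = \<lfloor>real k / real n * real (card {i \<in> {1..n}. c \<in> A i \<and> card (A i \<inter> W) < l})\<rfloor>"

lemma dlevel_hfun: "dlevel n A k c W = Max {l. int l = hfun n A k c W l}"
  unfolding dlevel_def hfun_def by simp

lemma hfun_mono: "a \<le> b \<Longrightarrow> hfun n A k c W a \<le> hfun n A k c W b"
proof -
  assume ab: "a \<le> b"
  have "card {i \<in> {1..n}. c \<in> A i \<and> card (A i \<inter> W) < a} \<le> card {i \<in> {1..n}. c \<in> A i \<and> card (A i \<inter> W) < b}"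
    by (rule card_mono) (use ab in auto)
  then show ?thesis unfolding hfun_def
    by (intro floor_mono mult_left_mono) auto
qed

lemma hfun_bound: "hfun n A k c W l \<le> int k"
proof -
  have c: "card {i \<in> {1..n}. c \<in> A i \<and> card (A i \<inter> W) < l} \<le> n"
    using card_mono[of "{1..n}" "{i \<in> {1..n}. c \<in> A i \<and> card (A i \<inter> W) < l}"] by fastforce
  have "real k / real n * real (card {i \<in> {1..n}. c \<in> A i \<and> card (A i \<inter> W) < l}) \<le> real k"
  proof (cases "n = 0")
    case True then show ?thesis by simp
  next
    case False
    have "real k / real n * real (card {i \<in> {1..n}. c \<in> A i \<and> card (A i \<inter> W) < l}) \<le> real k / real n * real n"
      by (intro mult_left_mono) (use c in auto)
    also have "\<dots> = real k" using False by simp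
    finally show ?thesis .
  qed
  then show ?thesis unfolding hfun_def by linarith
qed

lemma gfp_nat:
  fixes h :: "nat \<Rightarrow> int"
  assumes mono: "\<And>a b. a \<le> b \<Longrightarrow> h a \<le> h b" and bound: "\<And>l. h l \<le> int B"
  shows "int l \<le> h l \<Longrightarrow> \<exists>m\<ge>l. int m = h m"
proof (induction "B + 1 - l" arbitrary: l rule: less_induct)
  case (less l)
  show ?case
  proof (cases "h l = int l")
    case True then show ?thesis by auto
  next
    case False
    define l2 where "l2 = nat (h l)"
    have l2: "int l2 = h l" "l2 > l" using less.prems False unfolding l2_def by auto
    have "l2 \<le> B" using bound[of l] l2 by linarith
    have "int l2 \<le> h l2" using mono[of l l2] l2 by auto
    from less.hyps[OF _ this] \<open>l2 \<le> B\<close> l2 obtain m where "m \<ge> l2" "int m = h m" by force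
    then show ?thesis using l2 by (intro exI[of _ m]) auto
  qed
qed

lemma dlevel_set: "finite {l. int l = hfun n A k c W l}" "0 \<in> {l. int l = hfun n A k c W l}"
proof -
  show "finite {l. int l = hfun n A k c W l}"
  proof (rule finite_subset[of _ "{0..k}"])
    show "{l. int l = hfun n A k c W l} \<subseteq> {0..k}"
    proof
      fix l assume "l \<in> {l. int l = hfun n A k c W l}"
      then have "int l \<le> int k" using hfun_bound[of n A k c W l] by simp
      then show "l \<in> {0..k}" by simp
    qed
  qed auto
  show "0 \<in> {l. int l = hfun n A k c W l}" unfolding hfun_def by simp
qed

lemma dlevel_fix: "int (dlevel n A k c W) = hfun n A k c W (dlevel n A k c W)"
proof -
  let ?S = "{l. int l = hfun n A k c W l}"
  have ne: "?S \<noteq> {}" using dlevel_set(2)[of n A k c W] by (intro notI) (simp only: empty_iff)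
  have "Max ?S \<in> ?S" by (rule Max_in[OF dlevel_set(1) ne])
  then show ?thesis unfolding dlevel_hfun by simp
qed

lemma dlevel_ge: "int l \<le> hfun n A k c W l \<Longrightarrow> l \<le> dlevel n A k c W"
proof -
  assume "int l \<le> hfun n A k c W l"
  from gfp_nat[of "hfun n A k c W" k l, OF hfun_mono hfun_bound this]
  obtain m where m: "m \<ge> l" "int m = hfun n A k c W m" by auto
  have "m \<le> Max {l. int l = hfun n A k c W l}"
    by (rule Max_ge[OF dlevel_set(1)]) (use m in simp)
  then show ?thesis unfolding dlevel_hfun using m(1) by linarith
qed

lemma dlevel_anti:
  assumes "W \<subseteq> W'" "\<And>i. i \<in> {1..n} \<Longrightarrow> finite (A i)"
  shows "dlevel n A k c W' \<le> dlevel n A k c W"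
proof -
  let ?l = "dlevel n A k c W'"
  have sub: "{i \<in> {1..n}. c \<in> A i \<and> card (A i \<inter> W') < ?l} \<subseteq> {i \<in> {1..n}. c \<in> A i \<and> card (A i \<inter> W) < ?l}"
  proof
    fix i assume i: "i \<in> {i \<in> {1..n}. c \<in> A i \<and> card (A i \<inter> W') < ?l}"
    then have "card (A i \<inter> W) \<le> card (A i \<inter> W')"
      using assms by (intro card_mono) auto
    then show "i \<in> {i \<in> {1..n}. c \<in> A i \<and> card (A i \<inter> W) < ?l}" using i by auto
  qed
  have "hfun n A k c W' ?l \<le> hfun n A k c W ?l"
    unfolding hfun_def using card_mono[OF _ sub]
    by (intro floor_mono mult_left_mono) auto
  then show ?thesis using dlevel_fix[of n A k c W'] dlevel_ge[of "dlevel n A k c W'" n A k c W] by auto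
qed

lemma voter_level_ge:
  assumes "finite (A i)" "c' \<in> A i - (W \<union> {c})"
  shows "dlevel n A k c' W \<le> voter_level n A k W i c"
proof -
  have ne: "A i - (W \<union> {c}) \<noteq> {}" using assms(2) by blast
  have "dlevel n A k c' W \<le> Max ((\<lambda>c'. dlevel n A k c' W) ` (A i - (W \<union> {c})))"
    by (rule Max_ge) (use assms in auto)
  then show ?thesis unfolding voter_level_def using ne by simp
qed

lemma voter_level_obtain:
  assumes "finite (A i)" "voter_level n A k W i c > 0"
  obtains c' where "c' \<in> A i - (W \<union> {c})" "dlevel n A k c' W = voter_level n A k W i c"
proof -
  have ne: "A i - (W \<union> {c}) \<noteq> {}"
  proof
    assume "A i - (W \<union> {c}) = {}"
    then have "voter_level n A k W i c = 0" unfolding voter_level_def by simp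
    then show False using assms(2) by simp
  qed
  have "Max ((\<lambda>c'. dlevel n A k c' W) ` (A i - (W \<union> {c}))) \<in> (\<lambda>c'. dlevel n A k c' W) ` (A i - (W \<union> {c}))"
    by (rule Max_in) (use assms(1) ne in auto)
  then have "voter_level n A k W i c \<in> (\<lambda>c'. dlevel n A k c' W) ` (A i - (W \<union> {c}))"
    unfolding voter_level_def using ne by simp
  then obtain c' where "c' \<in> A i - (W \<union> {c})" "voter_level n A k W i c = dlevel n A k c' W" by (rule imageE)
  then show ?thesis using that[of c'] by simp
qed


lemma frac_mono:
  fixes l L a :: real
  assumes "0 < l" "l \<le> L" "0 \<le> a"
  shows "(l - a) / l \<le> (L - a) / L"
proof -
  have "a / L \<le> a / l" using assms by (intro divide_left_mono) auto
  moreover have "(l - a) / l = 1 - a / l" "(L - a) / L = 1 - a / L" using assms by (auto simp: field_simps)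
  ultimately show ?thesis by linarith
qed

lemma run_step:
  assumes "pjr_exact_run n C A k w f" "t \<in> {1..k}" "i \<in> {1..n}" "w t \<notin> A i"
  shows "f t i = f (t - 1) i"
proof -
  have "i \<in> {1..n} - voters n A (w t)" using assms(3,4) unfolding voters_def by auto
  then show ?thesis using assms(1,2) unfolding pjr_exact_run_def by blast
qed

lemma run_nonneg:
  assumes "pjr_exact_run n C A k w f" "t \<le> k" "i \<in> {1..n}"
  shows "0 \<le> f t i"
proof (cases "t = 0")
  case True then show ?thesis using assms unfolding pjr_exact_run_def by auto
next
  case False
  then have "t \<in> {1..k}" using assms by auto
  then show ?thesis using assms unfolding pjr_exact_run_def by blast
qed

lemma run_f0:
  assumes "pjr_exact_run n C A k w f" "i \<in> {1..n}"
  shows "f 0 i = 1"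
  using assms unfolding pjr_exact_run_def by blast

lemma f_unchanged:
  assumes run: "pjr_exact_run n C A k w f" and i: "i \<in> {1..n}"
  shows "j \<le> k \<Longrightarrow> s \<le> j \<Longrightarrow> (\<forall>t. s < t \<and> t \<le> j \<longrightarrow> w t \<notin> A i) \<Longrightarrow> f j i = f s i"
proof (induction j)
  case 0 then show ?case by simp
next
  case (Suc j)
  show ?case
  proof (cases "s = Suc j")
    case True then show ?thesis by simp
  next
    case False
    then have "s \<le> j" using Suc.prems by simp
    then have "f j i = f s i" using Suc.IH Suc.prems by simp
    moreover have "f (Suc j) i = f (Suc j - 1) i"
      by (rule run_step[OF run _ i]) (use Suc.prems \<open>s \<le> j\<close> in auto)
    ultimately show ?thesis by simp
  qed
qed


lemma keyK:
  assumes fin: "finite C" and AC: "\<forall>i\<in>{1..n}. A i \<subseteq> C" and run: "pjr_exact_run n C A k w f"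
    and jk: "j \<le> k" and norm: "\<forall>t\<in>{1..j}. normal_iteration n A k w f t"
    and i: "i \<in> {1..n}" and c': "c' \<in> A i - Wset w j"
    and lt: "card (A i \<inter> Wset w j) < dlevel n A k c' (Wset w j)"
  shows "(real (dlevel n A k c' (Wset w j)) - real (card (A i \<inter> Wset w j))) / real (dlevel n A k c' (Wset w j)) \<le> f j i"
proof -
  define l where "l = dlevel n A k c' (Wset w j)"
  define a where "a = card (A i \<inter> Wset w j)"
  have finA: "\<And>i. i \<in> {1..n} \<Longrightarrow> finite (A i)" using fin AC finite_subset by blast
  have lpos: "0 < l" using lt unfolding l_def by simp
  define T where "T = {t\<in>{1..j}. w t \<in> A i}"
  show ?thesis
  proof (cases "T = {}")
    case True
    have "A i \<inter> Wset w j = {}" unfolding Wset_def using True unfolding T_def by auto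
    then have a0: "a = 0" unfolding a_def by simp
    have "f j i = f 0 i"
      by (rule f_unchanged[OF run i jk]) (use True in \<open>auto simp: T_def\<close>)
    then have "f j i = 1" using run_f0[OF run i] by simp
    then show ?thesis using lpos a0 unfolding l_def[symmetric] a_def[symmetric] by simp
  next
    case False
    have finT: "finite T" unfolding T_def by simp
    define t where "t = Max T"
    have tT: "t \<in> T" unfolding t_def using finT False by (rule Max_in)
    have after: "\<forall>s. t < s \<and> s \<le> j \<longrightarrow> w s \<notin> A i"
    proof (intro allI impI)
      fix s assume s: "t < s \<and> s \<le> j"
      show "w s \<notin> A i"
      proof
        assume "w s \<in> A i"
        then have "s \<in> T" unfolding T_def using s tT unfolding T_def by auto
        then have "s \<le> t" unfolding t_def using finT by (simp add: Max_ge)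
        then show False using s by simp
      qed
    qed
    have t1: "1 \<le> t" "t \<le> j" "w t \<in> A i" using tT unfolding T_def by auto
    have fjt: "f j i = f t i"
      by (rule f_unchanged[OF run i jk]) (use t1 after in auto)
    have Weq: "A i \<inter> Wset w j = A i \<inter> Wset w t"
    proof
      show "A i \<inter> Wset w j \<subseteq> A i \<inter> Wset w t"
      proof
        fix x assume x: "x \<in> A i \<inter> Wset w j"
        then obtain s where s: "s \<in> {1..j}" "x = w s" unfolding Wset_def by blast
        have "s \<le> t" using after s x by (metis IntD1 atLeastAtMost_iff not_le)
        then show "x \<in> A i \<inter> Wset w t" using s x unfolding Wset_def by auto
      qed
      show "A i \<inter> Wset w t \<subseteq> A i \<inter> Wset w j" unfolding Wset_def using t1 by auto
    qed
    have nt: "normal_iteration n A k w f t" using norm t1 by auto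
    define L where "L = voter_level n A k (Wset w (t - 1)) i (w t)"
    have iv: "i \<in> voters n A (w t)" unfolding voters_def using i t1 by auto
    have sub1: "Wset w (t - 1) \<subseteq> Wset w j" unfolding Wset_def using t1 by auto
    have wtW: "w t \<in> Wset w j" unfolding Wset_def using t1 by auto
    have c'2: "c' \<in> A i - (Wset w (t - 1) \<union> {w t})" using c' sub1 wtW by auto
    have "l \<le> dlevel n A k c' (Wset w (t - 1))"
      unfolding l_def by (rule dlevel_anti[OF sub1 finA])
    also have "\<dots> \<le> L" unfolding L_def by (rule voter_level_ge[where A=A and i=i, OF finA[OF i] c'2])
    finally have lL: "l \<le> L" .
    have sub2: "Wset w (t - 1) \<subseteq> Wset w t" unfolding Wset_def by auto
    have "card (A i \<inter> Wset w (t - 1)) \<le> card (A i \<inter> Wset w t)"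
      by (rule card_mono) (use finA[OF i] sub2 in auto)
    also have "\<dots> = a" unfolding a_def Weq ..
    finally have "card (A i \<inter> Wset w (t - 1)) < L" using lt lL unfolding a_def l_def by linarith
    then have ft: "(real L - real a) / real L \<le> f t i"
      using nt iv unfolding normal_iteration_def L_def a_def Weq by blast
    have "(real l - real a) / real l \<le> (real L - real a) / real L"
      by (rule frac_mono) (use lpos lL in auto)
    then show ?thesis using ft fjt unfolding l_def[symmetric] a_def[symmetric] by linarith
  qed
qed


lemma gval_le: "voter_level n A k W i c \<le> card (A i \<inter> W) \<Longrightarrow> gval n A k W i c = 0"
  unfolding gval_def Let_def by simp

lemma gval_gt: "\<not> voter_level n A k W i c \<le> card (A i \<inter> W) \<Longrightarrow>
   gval n A k W i c = (real (voter_level n A k W i c) - real (card (A i \<inter> W)) - 1) / real (voter_level n A k W i c)"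
  unfolding gval_def Let_def by simp

theorem mainTheorem6:
  fixes n k :: nat and C :: "'c set" and A :: "nat \<Rightarrow> 'c set"
    and w :: "nat \<Rightarrow> 'c" and f :: "nat \<Rightarrow> nat \<Rightarrow> real" and j :: nat and c1 :: 'c
  assumes "finite C"
    and "\<forall>i\<in>{1..n}. A i \<subseteq> C"
    and "0 < k" and "k \<le> card C"
    and "pjr_exact_run n C A k w f"
    and "j \<le> k - 1"
    and "\<forall>t\<in>{1..j}. normal_iteration n A k w f t"
    and "c1 \<in> C - Wset w j"
    and "eager_state n A k w f j c1"
  shows "\<exists>c2\<in>C - Wset w j. normal_state n A k w f j c2"
proof -
  note fin = assms(1) and AC = assms(2) and run = assms(5) and norm = assms(7)
  have jk: "j \<le> k" using assms(6) by simp
  define W where "W = Wset w j"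
  have finA: "\<And>i. i \<in> {1..n} \<Longrightarrow> finite (A i)" using fin AC finite_subset by blast
  define S0 where "S0 = C - W"
  have finS0: "finite S0" unfolding S0_def using fin by simp
  have c1S0: "c1 \<in> S0" unfolding S0_def W_def using assms(8) by simp
  define Ls where "Ls = Max ((\<lambda>c. dlevel n A k c W) ` S0)"
  have "Ls \<in> (\<lambda>c. dlevel n A k c W) ` S0" unfolding Ls_def
    by (rule Max_in) (use finS0 c1S0 in auto)
  then obtain c2 where c2: "c2 \<in> S0" "Ls = dlevel n A k c2 W" by (rule imageE)
  have Lsmax: "\<And>c. c \<in> S0 \<Longrightarrow> dlevel n A k c W \<le> Ls"
    unfolding Ls_def using finS0 by simp
  have vsub: "\<And>c. voters n A c \<subseteq> {1..n}" unfolding voters_def by auto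
  have finv: "\<And>c. finite (voters n A c)" using vsub finite_subset by blast
  have Ls1: "1 \<le> Ls"
  proof -
    have e: "(\<Sum>i\<in>voters n A c1. f j i) \<ge> quota n k"
      "(\<Sum>i\<in>voters n A c1. f j i - gval n A k W i c1) < quota n k"
      using assms(9) unfolding eager_state_def W_def by auto
    have "(\<Sum>i\<in>voters n A c1. gval n A k W i c1) > 0"
      using e by (simp add: sum_subtractf)
    then obtain i where i: "i \<in> voters n A c1" "gval n A k W i c1 > 0"
      by (metis less_irrefl sum_nonpos not_le)
    have iN: "i \<in> {1..n}" using i vsub by blast
    have gt: "\<not> voter_level n A k W i c1 \<le> card (A i \<inter> W)"
      using i(2) gval_le[of n A k W i c1] by auto
    then have "voter_level n A k W i c1 > 0" by simp
    then obtain c' where c': "c' \<in> A i - (W \<union> {c1})" "dlevel n A k c' W = voter_level n A k W i c1"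
      using voter_level_obtain[where A=A and i=i, OF finA[OF iN]] by blast
    have "c' \<in> S0" unfolding S0_def using c' AC iN by auto
    then have "dlevel n A k c' W \<le> Ls" by (rule Lsmax)
    then show ?thesis using c' gt by simp
  qed
  have NS: "\<And>i. i \<in> voters n A c2 \<Longrightarrow> card (A i \<inter> W) < voter_level n A k W i c2 \<Longrightarrow>
      (real (voter_level n A k W i c2) - real (card (A i \<inter> W))) / real (voter_level n A k W i c2) \<le> f j i"
  proof -
    fix i assume i: "i \<in> voters n A c2" and lt: "card (A i \<inter> W) < voter_level n A k W i c2"
    have iN: "i \<in> {1..n}" using i vsub by blast
    have "voter_level n A k W i c2 > 0" using lt by simp
    then obtain c' where c': "c' \<in> A i - (W \<union> {c2})" "dlevel n A k c' W = voter_level n A k W i c2"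
      using voter_level_obtain[where A=A and i=i, OF finA[OF iN]] by blast
    show "(real (voter_level n A k W i c2) - real (card (A i \<inter> W))) / real (voter_level n A k W i c2) \<le> f j i"
      using keyK[OF fin AC run jk norm iN, of c'] c' lt unfolding W_def by auto
  qed
  have nonneg: "\<And>i. i \<in> voters n A c2 \<Longrightarrow> 0 \<le> f j i - gval n A k W i c2"
  proof -
    fix i assume i: "i \<in> voters n A c2"
    have iN: "i \<in> {1..n}" using i vsub by blast
    have f0: "0 \<le> f j i" by (rule run_nonneg[OF run jk iN])
    show "0 \<le> f j i - gval n A k W i c2"
    proof (cases "voter_level n A k W i c2 \<le> card (A i \<inter> W)")
      case True then show ?thesis using f0 gval_le[OF True] by simp
    next
      case False
      have "(real (voter_level n A k W i c2) - real (card (A i \<inter> W)) - 1) / real (voter_level n A k W i c2)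
          \<le> (real (voter_level n A k W i c2) - real (card (A i \<inter> W))) / real (voter_level n A k W i c2)"
        by (rule divide_right_mono) auto
      then show ?thesis using NS[OF i] False gval_gt[OF False] by simp
    qed
  qed
  define S where "S = {i \<in> {1..n}. c2 \<in> A i \<and> card (A i \<inter> W) < Ls}"
  have Ssub: "S \<subseteq> voters n A c2" unfolding S_def voters_def by auto
  have big: "\<And>i. i \<in> S \<Longrightarrow> 1 / real Ls \<le> f j i - gval n A k W i c2"
  proof -
    fix i assume iS: "i \<in> S"
    have i: "i \<in> voters n A c2" using iS Ssub by blast
    have iN: "i \<in> {1..n}" using i vsub by blast
    define a where "a = card (A i \<inter> W)"
    have aL: "a < Ls" using iS unfolding S_def a_def by simp
    have c2A: "c2 \<in> A i - Wset w j" using iS c2(1) unfolding S_def S0_def W_def by auto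
    have fK: "(real Ls - real a) / real Ls \<le> f j i"
      using keyK[OF fin AC run jk norm iN c2A] aL c2(2) unfolding a_def W_def by simp
    have Lpos: "0 < real Ls" using Ls1 by simp
    show "1 / real Ls \<le> f j i - gval n A k W i c2"
    proof (cases "voter_level n A k W i c2 \<le> card (A i \<inter> W)")
      case True
      have "1 / real Ls \<le> (real Ls - real a) / real Ls"
        by (rule divide_right_mono) (use aL in auto)
      then show ?thesis using fK gval_le[OF True] by simp
    next
      case False
      define L where "L = voter_level n A k W i c2"
      have Lg: "gval n A k W i c2 = (real L - real a - 1) / real L"
        using gval_gt[OF False] unfolding L_def a_def by simp
      have "L > 0" using False unfolding L_def by simp
      then obtain c' where c': "c' \<in> A i - (W \<union> {c2})" "dlevel n A k c' W = L"
        using voter_level_obtain[where A=A and i=i, OF finA[OF iN]] unfolding L_def by blast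
      have "c' \<in> S0" unfolding S0_def using c' AC iN by auto
      then have LL: "L \<le> Ls" using Lsmax c' by force
      have aL2: "a < L" using False unfolding L_def a_def by simp
      have "(real L - (real a + 1)) / real L \<le> (real Ls - (real a + 1)) / real Ls"
        by (rule frac_mono) (use aL2 LL in auto)
      moreover have "(real Ls - (real a + 1)) / real Ls = (real Ls - real a) / real Ls - 1 / real Ls"
        using Lpos by (simp add: field_simps)
      ultimately show ?thesis using fK Lg by (simp add: algebra_simps)
    qed
  qed
  have hf: "int Ls = hfun n A k c2 W Ls" using dlevel_fix[of n A k c2 W] c2(2) by simp
  have Lsle: "real Ls \<le> real k / real n * real (card S)"
    using hf unfolding hfun_def S_def by linarith
  have npos: "0 < n"
  proof (rule ccontr)
    assume "\<not> 0 < n" then have "n = 0" by simp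
    then show False using Lsle Ls1 by simp
  qed
  have q: "quota n k \<le> real (card S) / real Ls"
  proof -
    have "real Ls * real n \<le> real k * real (card S)"
      using Lsle npos by (simp add: field_simps)
    then show ?thesis unfolding quota_def using npos assms(3) Ls1
      by (simp add: field_simps)
  qed
  have "real (card S) / real Ls = (\<Sum>i\<in>S. 1 / real Ls)" by simp
  also have "\<dots> \<le> (\<Sum>i\<in>S. f j i - gval n A k W i c2)"
    by (rule sum_mono) (rule big)
  also have "\<dots> \<le> (\<Sum>i\<in>voters n A c2. f j i - gval n A k W i c2)"
    by (rule sum_mono2[OF finv Ssub]) (use nonneg in blast)
  finally have sumq: "quota n k \<le> (\<Sum>i\<in>voters n A c2. f j i - gval n A k W i c2)" using q by linarith
  have "normal_state n A k w f j c2"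
    unfolding normal_state_def not_starving_def
    using NS sumq unfolding W_def by blast
  then show ?thesis using c2(1) unfolding S0_def W_def by blast
qed

end
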